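(* Let $q$ be a prime power and let $\mathcal{C}$ be a $\mathcal{GRS}(n,k,d)$ code over $\mathbb{F}_q$ with $d=n-k+1$, distinct evaluation points $\alpha_0,\dots,\alpha_{n-1}\in\mathbb{F}_q$ and non-zero column multipliers $v_0,\dots,v_{n-1}$. Let $\vec c\in\mathcal{C}$ and $\vec r\in\mathbb{F}_q^n$, let $E=\{i : c_i\neq r_i\}$, $\epsilon=|E|$, and assume $\epsilon>d/2$. Let $\Lambda(x)=\prod_{i\in E}(x-\alpha_i)$. Let $H_1(x),H_2(x)\in\mathbb{F}_q[x]$ be coprime polynomials and $A(x),B(x)\in\mathbb{F}_q[x]$ polynomials such that $$\Lambda(x)=A(x)H_1(x)+B(x)H_2(x),\qquad \deg A=\epsilon-\deg H_1,\qquad \deg B\le \epsilon-d+\deg H_1 .$$ Let $L\le n$, $\tau$ and $\tau_L$ be positive integers, put $w_1=\tau-\deg H_1$ and $w_2=\tau-d+\deg H_1$, assume $w_1,w_2\ge 0$, and for $i=0,\dots,L-1$ let $P_i=(H_2(\alpha_i):-H_1(\alpha_i))\in\mathbb{P}^1_{\mathbb{F}_q}$. Let $s,\ell$ be positive integers and $Q(x,y,z)=\sum_{j=0}^{\ell}Q_j(x)y^jz^{\ell-j}$, $Q_j\in\mathbb{F}_q[x]$, a non-zero polynomial which has a zero of multiplicity at least $s$ at $(\alpha_i,P_i)$ for every $i=0,\dots,L-1$ and satisfies $\deg_{(1,w_1,w_2)}Q<s\tau_L$. Let $\epsilon_L=|E\cap\{0,\dots,L-1\}|$ and suppose $\epsilon\neq\tau$.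 Then $Q(x,A(x),B(x))=0$ provided that $$\frac{\ell}{s}\ge\frac{\tau_L-\epsilon_L}{\tau-\epsilon}\ \text{ when } \tau>\epsilon,\qquad\text{respectively}\qquad \frac{\ell}{s}\le\frac{\epsilon_L-\tau_L}{\epsilon-\tau}\ \text{ when } \tau<\epsilon.$$
   Context: A generalised Reed–Solomon code $\mathcal{GRS}(n,k,d)$ over $\mathbb{F}_q$ is $\{(v_0C(\alpha_0),\dots,v_{n-1}C(\alpha_{n-1})) : C\in\mathbb{F}_q[x],\ \deg C<k\}$. In the paper, $H_1,H_2$ are intermediate polynomials of the Extended Euclidean Algorithm run on $x^{d-1}$ and the syndrome polynomial of $\vec r$, and positions are indexed so that positions $0,\dots,L-1$ are the $L$ least reliable ones; only the stated properties are used. Points of $\mathbb{P}^1_{\mathbb{F}_q}$ are pairs $(a:b)\neq(0:0)$ up to non-zero scalar multiples. The $(1,w_1,w_2)$-weighted degree of $x^uy^jz^h$ is $u+w_1j+w_2h$, and of a polynomial the maximum over its monomials. A homogeneous $Q(x,y,z)$ has a zero of multiplicity at least $s$ at $(\alpha,(a:b))\in\mathbb{F}_q\times\mathbb{P}^1_{\mathbb{F}_q}$ if: when $b\neq0$, the polynomial $Q(x+\alpha,\,y+a/b,\,1)\in\mathbb{F}_q[x,y]$ has no monomial $x^uy^v$ with $u+v<s$; when $b=0$, the polynomial $Q(x+\alpha,1,z)\in\mathbb{F}_q[x,z]$ has no monomial $x^uz^v$ with $u+v<s$. *)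

theory Defs
  imports "HOL-Computational_Algebra.Polynomial"
begin

text \<open>Codewords of GRS(n,k,d): vectors (v_i C(alpha_i))_{i<n} with deg C < k.
  Vectors of length n are functions nat => 'a, only indices < n matter.\<close>
definition grs_code :: "nat \<Rightarrow> nat \<Rightarrow> (nat \<Rightarrow> 'a::field) \<Rightarrow> (nat \<Rightarrow> 'a) \<Rightarrow> (nat \<Rightarrow> 'a) set" where
  "grs_code n k \<alpha> v = {c. \<exists>C. degree C < k \<and> (\<forall>i<n. c i = v i * poly C (\<alpha> i))}"

text \<open>A homogeneous polynomial Q(x,y,z) = sum_{j<=l} Q_j(x) y^j z^(l-j) is represented by
  its coefficient function Qs :: nat => 'a poly (only j <= l used) and l.\<close>

text \<open>Coefficient of x^u y^v in Q(x+alpha, y+beta, 1) = sum_j Q_j(x+alpha) (y+beta)^j.\<close>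
definition coeff_shift_y :: "(nat \<Rightarrow> 'a::field poly) \<Rightarrow> nat \<Rightarrow> 'a \<Rightarrow> 'a \<Rightarrow> nat \<Rightarrow> nat \<Rightarrow> 'a" where
  "coeff_shift_y Qs l \<alpha> \<beta> u v =
     (\<Sum>j\<le>l. if v \<le> j then coeff (pcompose (Qs j) [:\<alpha>, 1:]) u * of_nat (j choose v) * \<beta> ^ (j - v) else 0)"

text \<open>Coefficient of x^u z^v in Q(x+alpha, 1, z) = sum_j Q_j(x+alpha) z^(l-j).\<close>
definition coeff_shift_z :: "(nat \<Rightarrow> 'a::field poly) \<Rightarrow> nat \<Rightarrow> 'a \<Rightarrow> nat \<Rightarrow> nat \<Rightarrow> 'a" where
  "coeff_shift_z Qs l \<alpha> u v = (if v \<le> l then coeff (pcompose (Qs (l - v)) [:\<alpha>, 1:]) u else 0)"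

text \<open>Q has a zero of multiplicity at least s at (alpha, (a:b)).\<close>
definition hom_mult_ge :: "(nat \<Rightarrow> 'a::field poly) \<Rightarrow> nat \<Rightarrow> nat \<Rightarrow> 'a \<Rightarrow> 'a \<Rightarrow> 'a \<Rightarrow> bool" where
  "hom_mult_ge Qs l s \<alpha> a b =
     (if b \<noteq> 0 then (\<forall>u v. u + v < s \<longrightarrow> coeff_shift_y Qs l \<alpha> (a / b) u v = 0)
      else (\<forall>u v. u + v < s \<longrightarrow> coeff_shift_z Qs l \<alpha> u v = 0))"

definition wdeg_less :: "(nat \<Rightarrow> 'a::zero poly) \<Rightarrow> nat \<Rightarrow> int \<Rightarrow> int \<Rightarrow> int \<Rightarrow> bool" where
  "wdeg_less Qs l w1 w2 D =
     (\<forall>j\<le>l. \<forall>u. coeff (Qs j) u \<noteq> 0 \<longrightarrow> int u + w1 * int j + w2 * int (l - j) < D)"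

definition hom_eval :: "(nat \<Rightarrow> 'a::comm_ring_1 poly) \<Rightarrow> nat \<Rightarrow> 'a poly \<Rightarrow> 'a poly \<Rightarrow> 'a poly" where
  "hom_eval Qs l A B = (\<Sum>j\<le>l. Qs j * A ^ j * B ^ (l - j))"

end

theory Submission
  imports Defs
begin

lemma monom_dvd_monom: "m \<le> n \<Longrightarrow> monom (1::'a::field) m dvd monom 1 n"
  by (auto simp: monom_1_dvd_iff' coeff_monom)

lemma monom1_dvd_pow: fixes Z :: "'a::field poly" assumes "poly Z 0 = 0"
  shows "monom 1 v dvd Z ^ v"
proof -
  have "monom 1 1 dvd Z" using assms by (simp add: monom_1_dvd_iff' poly_0_coeff_0)
  then have "monom 1 1 ^ v dvd Z ^ v" by (rule dvd_power_same)
  then show ?thesis by (simp add: monom_power)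
qed

lemma pcompose_power: "pcompose (p ^ j) r = (pcompose p r) ^ j"
  by (induct j) (simp_all add: pcompose_mult pcompose_1)

lemma shift_dvd:
  fixes p :: "'a::field poly"
  assumes "monom 1 s dvd pcompose p [:\<alpha>, 1:]"
  shows "[:-\<alpha>, 1:] ^ s dvd p"
proof -
  obtain H where H: "pcompose p [:\<alpha>, 1:] = monom 1 s * H" using assms by (auto elim: dvdE)
  have c: "pcompose [:\<alpha>, 1:] [:-\<alpha>, 1:] = [:0, 1:]"
    by (simp add: pcompose_pCons)
  have "p = pcompose p (pcompose [:\<alpha>, 1:] [:-\<alpha>, 1:])" by (simp add: c)
  also have "\<dots> = pcompose (monom 1 s * H) [:-\<alpha>, 1:]" by (simp add: pcompose_assoc H)
  also have "\<dots> = [:-\<alpha>, 1:] ^ s * pcompose H [:-\<alpha>, 1:]"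
    by (simp add: pcompose_mult monom_altdef pcompose_power pcompose_pCons)
  finally show ?thesis by (metis dvd_triv_left)
qed

lemma roots_degree:
  fixes p :: "'a::field poly"
  assumes "finite S" "p \<noteq> 0" "\<forall>a\<in>S. [:-a, 1:] ^ s dvd p"
  shows "s * card S \<le> degree p"
  using assms
proof (induction S arbitrary: p rule: finite_induct)
  case empty then show ?case by simp
next
  case (insert a S)
  obtain q where q: "p = [:-a, 1:] ^ s * q" using insert.prems by (auto elim: dvdE)
  have qnz: "q \<noteq> 0" using q insert.prems by auto
  have "\<forall>b\<in>S. [:-b, 1:] ^ s dvd q"
  proof
    fix b assume b: "b \<in> S"
    then have ba: "b \<noteq> a" using insert.hyps by auto
    have "s \<le> order b p" using insert.prems b by (auto simp: order_divides)
    moreover have "order b p = order b ([:-a, 1:] ^ s) + order b q"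
      using q insert.prems by (simp add: order_mult)
    moreover have "order b ([:-a, 1:] ^ s) = 0"
    proof -
      have "poly ([:-a, 1:] ^ s) b \<noteq> 0" using ba by simp
      then show ?thesis using order_root by blast
    qed
    ultimately show "[:-b, 1:] ^ s dvd q" by (simp add: order_divides)
  qed
  then have "s * card S \<le> degree q" using insert.IH qnz by blast
  moreover have "degree p = s + degree q" using q qnz
    by (simp add: degree_mult_eq degree_linear_power)
  ultimately show ?case using insert.hyps by simp
qed


lemma case_z:
  fixes Qs :: "nat \<Rightarrow> 'a::field poly"
  assumes h: "\<forall>u v. u + v < s \<longrightarrow> coeff_shift_z Qs l \<alpha> u v = 0" and Z: "poly Z 0 = 0"
  shows "monom 1 s dvd (\<Sum>j\<le>l. pcompose (Qs j) [:\<alpha>, 1:] * Y ^ j * Z ^ (l - j))"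
proof (rule dvd_sum)
  fix j assume j: "j \<in> {..l}"
  show "monom 1 s dvd pcompose (Qs j) [:\<alpha>, 1:] * Y ^ j * Z ^ (l - j)"
  proof (cases "s \<le> l - j")
    case True
    have "(monom 1 s :: 'a poly) dvd monom 1 (l - j)" using True by (simp add: monom_dvd_monom)
    also have "\<dots> dvd Z ^ (l - j)" using Z by (rule monom1_dvd_pow)
    finally show ?thesis by simp
  next
    case False
    have "\<forall>u<s - (l - j). coeff (pcompose (Qs j) [:\<alpha>, 1:]) u = 0"
    proof (intro allI impI)
      fix u assume "u < s - (l - j)"
      then have "u + (l - j) < s" by simp
      then have "coeff_shift_z Qs l \<alpha> u (l - j) = 0" using h by blast
      then show "coeff (pcompose (Qs j) [:\<alpha>, 1:]) u = 0" using j by (simp add: coeff_shift_z_def)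
    qed
    then have d1: "monom 1 (s - (l - j)) dvd pcompose (Qs j) [:\<alpha>, 1:]" by (simp add: monom_1_dvd_iff')
    have d2: "monom 1 (l - j) dvd Z ^ (l - j)" using Z by (rule monom1_dvd_pow)
    have "monom 1 (s - (l - j)) * monom 1 (l - j) dvd pcompose (Qs j) [:\<alpha>, 1:] * Z ^ (l - j)"
      using d1 d2 by (rule mult_dvd_mono)
    moreover have "monom 1 (s - (l - j)) * monom 1 (l - j) = (monom 1 s :: 'a poly)"
      using False by (simp add: mult_monom)
    ultimately have "monom 1 s dvd pcompose (Qs j) [:\<alpha>, 1:] * Z ^ (l - j)" by simp
    then show ?thesis by (metis dvd_mult2 mult.assoc mult.commute)
  qed
qed

lemma ident:
  fixes Qt :: "nat \<Rightarrow> 'a::field poly" and Y Z :: "'a poly" and \<beta> :: 'a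
  defines "W \<equiv> Y - smult \<beta> Z"
  shows "(\<Sum>j\<le>l. Qt j * Y ^ j * Z ^ (l - j)) =
    (\<Sum>v\<le>l. (\<Sum>j\<le>l. if v \<le> j then smult (of_nat (j choose v) * \<beta> ^ (j - v)) (Qt j) else 0) * W ^ v * Z ^ (l - v))"
proof -
  have Y: "Y = W + smult \<beta> Z" by (simp add: W_def)
  have t: "Qt j * Y ^ j * Z ^ (l - j) =
       (\<Sum>v\<le>l. if v \<le> j then smult (of_nat (j choose v) * \<beta> ^ (j - v)) (Qt j) * W ^ v * Z ^ (l - v) else 0)"
    if j: "j \<le> l" for j
  proof -
    have "Qt j * Y ^ j * Z ^ (l - j) = (\<Sum>v\<le>j. Qt j * (of_nat (j choose v) * W ^ v * (smult \<beta> Z) ^ (j - v)) * Z ^ (l - j))"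
      unfolding Y binomial_ring by (simp add: sum_distrib_left sum_distrib_right)
    also have "\<dots> = (\<Sum>v\<le>j. smult (of_nat (j choose v) * \<beta> ^ (j - v)) (Qt j) * W ^ v * Z ^ (l - v))"
    proof (rule sum.cong[OF refl])
      fix v assume v: "v \<in> {..j}"
      have "Z ^ (j - v) * Z ^ (l - j) = Z ^ (l - v)" using v j by (simp add: power_add[symmetric])
      then show "Qt j * (of_nat (j choose v) * W ^ v * (smult \<beta> Z) ^ (j - v)) * Z ^ (l - j) =
          smult (of_nat (j choose v) * \<beta> ^ (j - v)) (Qt j) * W ^ v * Z ^ (l - v)"
        by (simp add: smult_power of_nat_poly mult_ac)
    qed
    also have "\<dots> = (\<Sum>v\<le>l. if v \<le> j then smult (of_nat (j choose v) * \<beta> ^ (j - v)) (Qt j) * W ^ v * Z ^ (l - v) else 0)"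
    proof -
      have "(\<Sum>v\<le>l. if v \<le> j then smult (of_nat (j choose v) * \<beta> ^ (j - v)) (Qt j) * W ^ v * Z ^ (l - v) else 0)
          = (\<Sum>v\<in>{..l} \<inter> {v. v \<le> j}. smult (of_nat (j choose v) * \<beta> ^ (j - v)) (Qt j) * W ^ v * Z ^ (l - v))"
        by (simp only: sum.inter_restrict[OF finite_atMost] mem_Collect_eq)
      also have "{..l} \<inter> {v. v \<le> j} = {..j}" using j by auto
      finally show ?thesis by simp
    qed
    finally show ?thesis .
  qed
  have "(\<Sum>j\<le>l. Qt j * Y ^ j * Z ^ (l - j)) =
     (\<Sum>j\<le>l. \<Sum>v\<le>l. if v \<le> j then smult (of_nat (j choose v) * \<beta> ^ (j - v)) (Qt j) * W ^ v * Z ^ (l - v) else 0)"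
    using t by (intro sum.cong) auto
  also have "\<dots> = (\<Sum>v\<le>l. \<Sum>j\<le>l. if v \<le> j then smult (of_nat (j choose v) * \<beta> ^ (j - v)) (Qt j) * W ^ v * Z ^ (l - v) else 0)"
    by (rule sum.swap)
  also have "\<dots> = (\<Sum>v\<le>l. (\<Sum>j\<le>l. if v \<le> j then smult (of_nat (j choose v) * \<beta> ^ (j - v)) (Qt j) else 0) * W ^ v * Z ^ (l - v))"
    by (auto simp: sum_distrib_right intro!: sum.cong)
  finally show ?thesis .
qed


lemma case_y:
  fixes Qs :: "nat \<Rightarrow> 'a::field poly"
  assumes h: "\<forall>u v. u + v < s \<longrightarrow> coeff_shift_y Qs l \<alpha> \<beta> u v = 0"
    and W0: "poly (Y - smult \<beta> Z) 0 = 0"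
  shows "monom 1 s dvd (\<Sum>j\<le>l. pcompose (Qs j) [:\<alpha>, 1:] * Y ^ j * Z ^ (l - j))"
proof -
  define R where "R v = (\<Sum>j\<le>l. if v \<le> j then smult (of_nat (j choose v) * \<beta> ^ (j - v)) (pcompose (Qs j) [:\<alpha>, 1:]) else 0)" for v
  have cR: "coeff (R v) u = coeff_shift_y Qs l \<alpha> \<beta> u v" for u v
    unfolding R_def coeff_shift_y_def coeff_sum
    by (intro sum.cong) (auto simp: mult_ac)
  have eq: "(\<Sum>j\<le>l. pcompose (Qs j) [:\<alpha>, 1:] * Y ^ j * Z ^ (l - j)) =
      (\<Sum>v\<le>l. R v * (Y - smult \<beta> Z) ^ v * Z ^ (l - v))"
    unfolding R_def by (rule ident)
  show ?thesis unfolding eq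
  proof (rule dvd_sum)
    fix v assume v: "v \<in> {..l}"
    show "monom 1 s dvd R v * (Y - smult \<beta> Z) ^ v * Z ^ (l - v)"
    proof (cases "s \<le> v")
      case True
      have "(monom 1 s :: 'a poly) dvd monom 1 v" using True by (simp add: monom_dvd_monom)
      also have "\<dots> dvd (Y - smult \<beta> Z) ^ v" using W0 by (rule monom1_dvd_pow)
      finally show ?thesis by (metis dvd_mult2 mult.commute)
    next
      case False
      have "\<forall>u<s - v. coeff (R v) u = 0" using h False by (simp add: cR)
      then have d1: "monom 1 (s - v) dvd R v" by (simp add: monom_1_dvd_iff')
      have d2: "monom 1 v dvd (Y - smult \<beta> Z) ^ v" using W0 by (rule monom1_dvd_pow)
      have "monom 1 (s - v) * monom 1 v dvd R v * (Y - smult \<beta> Z) ^ v"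
        using d1 d2 by (rule mult_dvd_mono)
      moreover have "monom 1 (s - v) * monom 1 v = (monom 1 s :: 'a poly)"
        using False by (simp add: mult_monom)
      ultimately show ?thesis by (metis dvd_mult2)
    qed
  qed
qed

lemma point:
  fixes Qs :: "nat \<Rightarrow> 'a::field poly"
  assumes m: "hom_mult_ge Qs l s \<alpha> a b" and ab: "a \<noteq> 0 \<or> b \<noteq> 0"
    and rel: "poly A \<alpha> * b = poly B \<alpha> * a"
  shows "[:-\<alpha>, 1:] ^ s dvd hom_eval Qs l A B"
proof (rule shift_dvd)
  define Y where "Y = pcompose A [:\<alpha>, 1:]"
  define Z where "Z = pcompose B [:\<alpha>, 1:]"
  have eq: "pcompose (hom_eval Qs l A B) [:\<alpha>, 1:] = (\<Sum>j\<le>l. pcompose (Qs j) [:\<alpha>, 1:] * Y ^ j * Z ^ (l - j))"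
    by (simp add: hom_eval_def pcompose_sum pcompose_mult pcompose_power Y_def Z_def)
  have Y0: "poly Y 0 = poly A \<alpha>" and Z0: "poly Z 0 = poly B \<alpha>"
    by (simp_all add: Y_def Z_def poly_pcompose)
  show "monom 1 s dvd pcompose (hom_eval Qs l A B) [:\<alpha>, 1:]"
  proof (cases "b = 0")
    case True
    then have "a \<noteq> 0" using ab by simp
    then have "poly Z 0 = 0" using rel True Z0 by simp
    moreover have "\<forall>u v. u + v < s \<longrightarrow> coeff_shift_z Qs l \<alpha> u v = 0"
      using m True by (simp add: hom_mult_ge_def)
    ultimately show ?thesis unfolding eq by (intro case_z)
  next
    case False
    have "poly (Y - smult (a / b) Z) 0 = 0"
      using rel False Y0 Z0 by (simp add: field_simps)
    moreover have "\<forall>u v. u + v < s \<longrightarrow> coeff_shift_y Qs l \<alpha> (a / b) u v = 0"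
      using m False by (simp add: hom_mult_ge_def)
    ultimately show ?thesis unfolding eq by (intro case_y)
  qed
qed


theorem lemma1:
  fixes \<alpha> v c r :: "nat \<Rightarrow> 'a::{finite, field}"
    and n k d L \<tau> \<tau>L s l :: nat
    and H1 H2 A B :: "'a poly"
    and Qs :: "nat \<Rightarrow> 'a poly"
  assumes k: "1 \<le> k" "k \<le> n"
    and d: "d = n - k + 1"
    and dist: "inj_on \<alpha> {..<n}"
    and v: "\<forall>i<n. v i \<noteq> 0"
    and c: "c \<in> grs_code n k \<alpha> v"
  defines "E \<equiv> {i. i < n \<and> c i \<noteq> r i}"
  defines "\<epsilon> \<equiv> card E"
  defines "\<Lambda> \<equiv> (\<Prod>i\<in>E. [:- \<alpha> i, 1:])"
  assumes eps: "2 * \<epsilon> > d"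
    and cop: "coprime H1 H2"
    and key: "\<Lambda> = A * H1 + B * H2"
    and degA: "A \<noteq> 0" "int (degree A) = int \<epsilon> - int (degree H1)"
    and degB: "B = 0 \<or> int (degree B) \<le> int \<epsilon> - int d + int (degree H1)"
    and L: "L \<le> n" and tau: "0 < \<tau>" "0 < \<tau>L"
  defines "w1 \<equiv> int \<tau> - int (degree H1)"
  defines "w2 \<equiv> int \<tau> - int d + int (degree H1)"
  assumes w: "w1 \<ge> 0" "w2 \<ge> 0"
    and sl: "0 < s" "0 < l"
    and Qnz: "\<exists>j\<le>l. Qs j \<noteq> 0"
    and mult: "\<forall>i<L. hom_mult_ge Qs l s (\<alpha> i) (poly H2 (\<alpha> i)) (- poly H1 (\<alpha> i))"
    and wdeg: "wdeg_less Qs l w1 w2 (int s * int \<tau>L)"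
  defines "\<epsilon>L \<equiv> card (E \<inter> {..<L})"
  assumes ne: "\<epsilon> \<noteq> \<tau>"
    and cond_gt: "\<tau> > \<epsilon> \<Longrightarrow> real l / real s \<ge> (real \<tau>L - real \<epsilon>L) / (real \<tau> - real \<epsilon>)"
    and cond_lt: "\<tau> < \<epsilon> \<Longrightarrow> real l / real s \<le> (real \<epsilon>L - real \<tau>L) / (real \<epsilon> - real \<tau>)"
  shows "hom_eval Qs l A B = 0"
proof (rule ccontr)
  define F where "F = hom_eval Qs l A B"
  assume "hom_eval Qs l A B \<noteq> 0"
  then have Fnz: "F \<noteq> 0" by (simp add: F_def)
  define S where "S = \<alpha> ` (E \<inter> {..<L})"
  have finE: "finite E" unfolding E_def by simp
  have cardS: "card S = \<epsilon>L"
    unfolding S_def \<epsilon>L_def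
    by (rule card_image, rule inj_on_subset[OF dist]) (auto simp: E_def)
  have roots: "\<forall>a\<in>S. [:-a, 1:] ^ s dvd F"
  proof
    fix a assume "a \<in> S"
    then obtain i where i: "i \<in> E" "i < L" and a: "a = \<alpha> i" unfolding S_def by auto
    have "poly \<Lambda> (\<alpha> i) = 0" unfolding \<Lambda>_def poly_prod
      using i finE by (intro prod_zero) auto
    then have rel0: "poly A a * poly H1 a + poly B a * poly H2 a = 0"
      using key a by simp
    have ab: "poly H2 a \<noteq> 0 \<or> - poly H1 a \<noteq> 0"
    proof (rule ccontr)
      assume "\<not> (poly H2 a \<noteq> 0 \<or> - poly H1 a \<noteq> 0)"
      then have "[:-a, 1:] dvd H1" "[:-a, 1:] dvd H2" by (simp_all add: dvd_iff_poly_eq_0)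
      then have "is_unit [:-a, 1:]" using cop by (blast intro: coprime_common_divisor)
      then show False by (simp add: is_unit_iff_degree)
    qed
    have rel: "poly A a * (- poly H1 a) = poly B a * poly H2 a"
    proof -
      from rel0 have "poly B a * poly H2 a = - (poly A a * poly H1 a)" by (simp add: add_eq_0_iff)
      then show ?thesis by simp
    qed
    show "[:-a, 1:] ^ s dvd F" unfolding F_def
      using point[OF _ ab rel] mult i a by blast
  qed
  have lowdeg: "s * \<epsilon>L \<le> degree F"
    using roots_degree[OF _ Fnz roots] cardS unfolding S_def by simp
  define D where "D = int s * int \<tau>L + int l * (int \<epsilon> - int \<tau>)"
  have tdeg: "int (degree (Qs j * A ^ j * B ^ (l - j))) < D"
    if j: "j \<le> l" and nz: "Qs j * A ^ j * B ^ (l - j) \<noteq> 0" for j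
  proof -
    have Qnz: "Qs j \<noteq> 0" using nz by auto
    have Bc: "B \<noteq> 0 \<or> l - j = 0" using nz by auto
    have "degree (Qs j * A ^ j * B ^ (l - j)) \<le> degree (Qs j) + degree A * j + degree B * (l - j)"
      by (meson add_le_mono degree_mult_le degree_power_le le_trans order_refl)
    then have d1: "int (degree (Qs j * A ^ j * B ^ (l - j))) \<le>
        int (degree (Qs j)) + int (degree A) * int j + int (degree B) * int (l - j)" by (metis of_nat_add of_nat_mult of_nat_le_iff)
    have d2: "int (degree B) * int (l - j) \<le> (int \<epsilon> - int d + int (degree H1)) * int (l - j)"
      using Bc degB by (auto intro: mult_right_mono)
    have "coeff (Qs j) (degree (Qs j)) \<noteq> 0" using Qnz by simp
    then have wd: "int (degree (Qs j)) + w1 * int j + w2 * int (l - j) < int s * int \<tau>L"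
      using wdeg j unfolding wdeg_less_def by blast
    have lj: "int j + int (l - j) = int l" using j by simp
    have "int (degree (Qs j)) + int (degree A) * int j + (int \<epsilon> - int d + int (degree H1)) * int (l - j)
       = (int (degree (Qs j)) + w1 * int j + w2 * int (l - j)) + (int j + int (l - j)) * (int \<epsilon> - int \<tau>)"
      unfolding degA(2) w1_def w2_def by (simp add: algebra_simps)
    then show ?thesis using d1 d2 wd unfolding D_def lj[symmetric] by linarith
  qed
  have coeffF: "coeff F u = 0" if u: "D \<le> int u" for u
    unfolding F_def hom_eval_def coeff_sum
  proof (intro sum.neutral ballI)
    fix j assume j: "j \<in> {..l}"
    show "coeff (Qs j * A ^ j * B ^ (l - j)) u = 0"
    proof (cases "Qs j * A ^ j * B ^ (l - j) = 0")
      case True then show ?thesis by (simp only: coeff_0)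
    next
      case False
      with tdeg j have "int (degree (Qs j * A ^ j * B ^ (l - j))) < D" by auto
      with u show ?thesis by (intro coeff_eq_0) linarith
    qed
  qed
  have "coeff F (degree F) \<noteq> 0" using Fnz by simp
  then have degF: "int (degree F) < D" using coeffF by (meson not_le)
  have Dle: "D \<le> int s * int \<epsilon>L"
  proof (cases "\<tau> > \<epsilon>")
    case True
    have sp: "real s > 0" using sl by simp
    have tp: "real \<tau> - real \<epsilon> > 0" using True by simp
    have "(real \<tau>L - real \<epsilon>L) / (real \<tau> - real \<epsilon>) \<le> real l / real s" using cond_gt True by simp
    then have "real s * (real \<tau>L - real \<epsilon>L) \<le> real l * (real \<tau> - real \<epsilon>)"
      using sp tp by (simp add: field_simps)
    then have "real_of_int D \<le> real_of_int (int s * int \<epsilon>L)"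
      unfolding D_def by (simp add: algebra_simps)
    then show ?thesis by (simp only: of_int_le_iff)
  next
    case False
    then have lt: "\<tau> < \<epsilon>" using ne by simp
    have sp: "real s > 0" using sl by simp
    have tp: "real \<epsilon> - real \<tau> > 0" using lt by simp
    have "real l / real s \<le> (real \<epsilon>L - real \<tau>L) / (real \<epsilon> - real \<tau>)" using cond_lt lt by simp
    then have "real l * (real \<epsilon> - real \<tau>) \<le> real s * (real \<epsilon>L - real \<tau>L)"
      using sp tp by (simp add: field_simps)
    then have "real_of_int D \<le> real_of_int (int s * int \<epsilon>L)"
      unfolding D_def by (simp add: algebra_simps)
    then show ?thesis by (simp only: of_int_le_iff)
  qed
  from lowdeg have "int s * int \<epsilon>L \<le> int (degree F)" by (metis of_nat_le_iff of_nat_mult)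
  with degF Dle show False by linarith
qed

end
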